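(* Let $\mathcal{F}\subset\mathbb{R}^{n\times n}$ be finite, $\mathbf{A}\in\mathbb{R}^{n\times n}$, $\delta\in(0,1)$, and $\mathrm{OPT}=\min_{\mathbf{B}\in\mathcal{F}}\|\mathbf{A}-\mathbf{B}\|_\mathsf{F}$. If the universal constant $c$ in the Coarse Approximation procedure (described in the context) is sufficiently large, the procedure uses $O(\log(1/\delta))$ queries of the form $\mathbf{x}\mapsto\mathbf{A}\mathbf{x}$ and outputs $M$ satisfying, with probability at least $1-\delta$, $$\mathrm{OPT}\le M\le 6|\mathcal{F}|\cdot\mathrm{OPT}.$$
   Context: Coarse Approximation procedure with inputs $\mathcal{F}$, $\delta$: set $t=\lceil c\log(1/\delta)\rceil$ for a universal constant $c$. Draw independent $\mathbf{\Pi}^1,\dots,\mathbf{\Pi}^t\in\mathbb{R}^{n\times 2}$, each with i.i.d. $\mathcal{N}(0,1/2)$ entries. For each $i$, compute $\mathbf{A}\mathbf{\Pi}^i$ (2 queries) and let $M_i=\sqrt{6|\mathcal{F}|}\cdot\min_{\mathbf{B}\in\mathcal{F}}\|\mathbf{A}\mathbf{\Pi}^i-\mathbf{B}\mathbf{\Pi}^i\|_\mathsf{F}$. Output $M=\mathrm{median}(M_1,\dots,M_t)$. *)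

theory Defs
  imports "HOL-Probability.Probability"
begin

text \<open>Matrices are represented as functions nat => nat => real; an n x m matrix
  is such a function that vanishes outside the index range.\<close>

definition sq_mats :: "nat \<Rightarrow> (nat \<Rightarrow> nat \<Rightarrow> real) set" where
  "sq_mats n = {X. \<forall>i j. (n \<le> i \<or> n \<le> j) \<longrightarrow> X i j = 0}"

definition frob :: "nat \<Rightarrow> nat \<Rightarrow> (nat \<Rightarrow> nat \<Rightarrow> real) \<Rightarrow> real" where
  "frob m k X = sqrt (\<Sum>i<m. \<Sum>j<k. (X i j)\<^sup>2)"

definition apply_sketch :: "nat \<Rightarrow> (nat \<Rightarrow> nat \<Rightarrow> real) \<Rightarrow> (nat \<times> nat \<Rightarrow> real) \<Rightarrow> (nat \<Rightarrow> nat \<Rightarrow> real)" where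
  "apply_sketch n X P = (\<lambda>i j. \<Sum>k<n. X i k * P (k, j))"

text \<open>N(0,1/2): standard deviation sqrt(1/2).\<close>
definition gauss_half :: "real measure" where
  "gauss_half = density lborel (normal_density 0 (sqrt (1/2)))"

definition sketch_measure :: "nat \<Rightarrow> (nat \<times> nat \<Rightarrow> real) measure" where
  "sketch_measure n = PiM ({..<n} \<times> {..<2}) (\<lambda>_. gauss_half)"

definition trials :: "nat \<Rightarrow> nat \<Rightarrow> (nat \<Rightarrow> (nat \<times> nat \<Rightarrow> real)) measure" where
  "trials n t = PiM {..<t} (\<lambda>_. sketch_measure n)"

text \<open>Median of a list: the element at position (length div 2) of the sorted list
  (for odd length this is the usual median; for even length the upper median).\<close>
definition median :: "real list \<Rightarrow> real" where
  "median xs = sort xs ! (length xs div 2)"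

definition single_estimate ::
  "nat \<Rightarrow> (nat \<Rightarrow> nat \<Rightarrow> real) set \<Rightarrow> (nat \<Rightarrow> nat \<Rightarrow> real) \<Rightarrow> (nat \<times> nat \<Rightarrow> real) \<Rightarrow> real" where
  "single_estimate n F A P = sqrt (6 * real (card F)) *
     Min ((\<lambda>B. frob n 2 (\<lambda>i j. apply_sketch n A P i j - apply_sketch n B P i j)) ` F)"

definition coarse_output ::
  "nat \<Rightarrow> (nat \<Rightarrow> nat \<Rightarrow> real) set \<Rightarrow> (nat \<Rightarrow> nat \<Rightarrow> real) \<Rightarrow> nat \<Rightarrow> (nat \<Rightarrow> (nat \<times> nat \<Rightarrow> real)) \<Rightarrow> real" where
  "coarse_output n F A t \<omega> = median (map (\<lambda>i. single_estimate n F A (\<omega> i)) [0..<t])"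

text \<open>Number of matrix-vector queries: each sketch Pi^i has 2 columns.\<close>
definition num_queries :: "nat \<Rightarrow> nat" where
  "num_queries t = 2 * t"

definition num_trials :: "real \<Rightarrow> real \<Rightarrow> nat" where
  "num_trials c \<delta> = nat \<lceil>c * ln (1 / \<delta>)\<rceil>"

end

theory Submission
  imports Defs
begin

lemma gh_prob: "prob_space gauss_half"
  unfolding gauss_half_def by (rule prob_space_normal_density) simp
lemma sets_gh[simp]: "sets gauss_half = sets borel"
  unfolding gauss_half_def by simp
lemma space_gh[simp]: "space gauss_half = UNIV"
  unfolding gauss_half_def by simp

lemma indep_coords:
  assumes M: "\<And>i. i \<in> I \<Longrightarrow> prob_space (M i)"
  shows "prob_space.indep_vars (PiM I M) M (\<lambda>i \<omega>. \<omega> i) I"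
proof -
  interpret P: prob_space "PiM I M" using M by (rule prob_space_PiM)
  show ?thesis
  proof (cases "I = {}")
    case True
    then show ?thesis unfolding P.indep_vars_def P.indep_sets_def by simp
  next
    case False
    have "distr (PiM I M) (PiM I M) (\<lambda>x. \<lambda>i\<in>I. x i) = distr (PiM I M) (PiM I M) (\<lambda>x. x)"
      by (rule distr_cong) (auto simp: space_PiM PiE_def extensional_restrict)
    also have "\<dots> = PiM I M" by simp
    also have "\<dots> = (\<Pi>\<^sub>M i\<in>I. distr (PiM I M) (M i) (\<lambda>x. x i))"
      by (rule PiM_cong) (auto simp: distr_PiM_component M)
    finally show ?thesis
      by (subst P.indep_vars_iff_distr_eq_PiM'[OF False]) auto
  qed
qed

lemma sets_sketch: "sets (sketch_measure n) = sets (PiM ({..<n} \<times> {..<2}) (\<lambda>_. borel))"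
  unfolding sketch_measure_def by (rule sets_PiM_cong) auto

lemma space_sketch: "space (sketch_measure n) = space (PiM ({..<n} \<times> {..<2}) (\<lambda>_. borel))"
  using sets_eq_imp_space_eq[OF sets_sketch] .

lemma prob_sketch: "prob_space (sketch_measure n)"
  unfolding sketch_measure_def by (intro prob_space_PiM gh_prob)

lemma comp_meas_sk[measurable]:
  assumes "k < n" "j < 2"
  shows "(\<lambda>P. P (k, j)) \<in> borel_measurable (sketch_measure n)"
  unfolding measurable_cong_sets[OF sets_sketch refl]
  using assms by (intro measurable_component_singleton) auto

lemma indep_sk:
  "prob_space.indep_vars (sketch_measure n) (\<lambda>_. borel) (\<lambda>i \<omega>. \<omega> i) ({..<n} \<times> {..<2})"
proof -
  interpret P: prob_space "sketch_measure n" by (rule prob_sketch)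
  have "P.indep_vars (\<lambda>_. gauss_half) (\<lambda>i \<omega>. \<omega> i) ({..<n} \<times> {..<2})"
    unfolding sketch_measure_def by (rule indep_coords) (rule gh_prob)
  then have "P.indep_vars (\<lambda>_. borel) (\<lambda>i \<omega>. id (\<omega> i)) ({..<n} \<times> {..<2})"
    by (rule P.indep_vars_compose2) (simp add: measurable_ident_sets)
  then show ?thesis by simp
qed

lemma distr_coord_sk:
  assumes "p \<in> {..<n} \<times> {..<2}"
  shows "distributed (sketch_measure n) lborel (\<lambda>P. P p) (normal_density 0 (sqrt (1/2)))"
  unfolding distributed_def
proof (intro conjI)
  have "distr (sketch_measure n) lborel (\<lambda>P. P p) = distr (sketch_measure n) gauss_half (\<lambda>P. P p)"
    by (rule distr_cong) auto
  also have "\<dots> = gauss_half"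
    unfolding sketch_measure_def using assms by (intro distr_PiM_component gh_prob) auto
  finally show "distr (sketch_measure n) lborel (\<lambda>P. P p) = density lborel (normal_density 0 (sqrt (1/2)))"
    unfolding gauss_half_def .
  show "(\<lambda>x. ennreal (normal_density 0 (sqrt (1 / 2)) x)) \<in> borel_measurable lborel" by simp
  show "(\<lambda>P. P p) \<in> measurable (sketch_measure n) lborel"
    unfolding measurable_cong_sets[OF sets_sketch refl] measurable_lborel1
    using assms by (intro measurable_component_singleton) auto
qed

lemma sumK:
  fixes F :: "nat \<Rightarrow> nat \<Rightarrow> real"
  assumes j: "j < 2" and F0: "\<And>k. x k = 0 \<Longrightarrow> F k j = 0"
  shows "(\<Sum>p\<in>{p \<in> {..<n} \<times> {..<2}. snd p = j \<and> x (fst p) \<noteq> (0::real)}. F (fst p) (snd p)) = (\<Sum>k<n. F k j)"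
proof -
  have K: "{p \<in> {..<n} \<times> {..<2}. snd p = j \<and> x (fst p) \<noteq> 0} = (\<lambda>k. (k, j)) ` {k \<in> {..<n}. x k \<noteq> 0}"
    using j by auto
  have "(\<Sum>p\<in>{p \<in> {..<n} \<times> {..<2}. snd p = j \<and> x (fst p) \<noteq> 0}. F (fst p) (snd p)) = (\<Sum>k\<in>{k \<in> {..<n}. x k \<noteq> 0}. F k j)"
    unfolding K by (subst sum.reindex) (auto intro: inj_onI)
  also have "\<dots> = (\<Sum>k<n. F k j)"
    by (rule sum.mono_neutral_left) (auto simp: F0)
  finally show ?thesis .
qed

lemma row_normal:
  fixes x :: "nat \<Rightarrow> real"
  assumes j: "j < 2" and pos: "(\<Sum>k<n. (x k)\<^sup>2) > 0"
  shows "distributed (sketch_measure n) lborel (\<lambda>P. \<Sum>k<n. x k * P (k,j))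
           (normal_density 0 (sqrt ((\<Sum>k<n. (x k)\<^sup>2) / 2)))"
proof -
  interpret P: prob_space "sketch_measure n" by (rule prob_sketch)
  define K where "K = {p \<in> {..<n} \<times> {..<2}. snd p = j \<and> x (fst p) \<noteq> 0}"
  have finK: "finite K" unfolding K_def by (rule finite_subset[of _ "{..<n} \<times> {..<2}"]) auto
  have "\<exists>k<n. x k \<noteq> 0"
  proof (rule ccontr)
    assume "\<not> (\<exists>k<n. x k \<noteq> 0)"
    then have "\<forall>k<n. x k = 0" by blast
    then have "(\<Sum>k<n. (x k)\<^sup>2) = 0" by simp
    with pos show False by simp
  qed
  then obtain k where k: "k < n" "x k \<noteq> 0" by blast
  have neK: "K \<noteq> {}" using k j unfolding K_def by (auto intro!: exI[of _ "(k,j)"])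
  have "P.indep_vars (\<lambda>_. borel) (\<lambda>i \<omega>. \<omega> i) K"
    by (rule P.indep_vars_subset[OF indep_sk]) (auto simp: K_def)
  then have ind: "P.indep_vars (\<lambda>_. borel) (\<lambda>p P. x (fst p) * P p) K"
    by (rule P.indep_vars_compose2[where Y="\<lambda>p v. x (fst p) * v"]) simp
  have dist: "distributed (sketch_measure n) lborel (\<lambda>P. x (fst p) * P p)
      (normal_density 0 (\<bar>x (fst p)\<bar> * sqrt (1/2)))" if "p \<in> K" for p
  proof -
    have "p \<in> {..<n} \<times> {..<2}" "x (fst p) \<noteq> 0" using that by (auto simp: K_def)
    from P.normal_density_affine[OF distr_coord_sk[OF this(1)] _ this(2), of 0]
    show ?thesis by simp
  qed
  have pos': "\<And>p. p \<in> K \<Longrightarrow> 0 < \<bar>x (fst p)\<bar> * sqrt (1/2)"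
    by (auto simp: K_def)
  from P.sum_indep_normal[OF finK neK ind pos' dist]
  have D: "distributed (sketch_measure n) lborel (\<lambda>P. \<Sum>p\<in>K. x (fst p) * P p)
     (normal_density 0 (sqrt (\<Sum>p\<in>K. (\<bar>x (fst p)\<bar> * sqrt (1/2))\<^sup>2)))" by simp
  have e1: "(\<lambda>P. \<Sum>p\<in>K. x (fst p) * P p) = (\<lambda>P. \<Sum>k<n. x k * P (k,j))"
  proof
    fix P :: "nat \<times> nat \<Rightarrow> real"
    have "(\<Sum>p\<in>K. x (fst p) * P p) = (\<Sum>p\<in>K. x (fst p) * P (fst p, snd p))" by simp
    also have "\<dots> = (\<Sum>k<n. x k * P (k,j))"
      unfolding K_def by (rule sumK[OF j]) simp
    finally show "(\<Sum>p\<in>K. x (fst p) * P p) = (\<Sum>k<n. x k * P (k,j))" .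
  qed
  have e2: "(\<Sum>p\<in>K. (\<bar>x (fst p)\<bar> * sqrt (1/2))\<^sup>2) = (\<Sum>k<n. (x k)\<^sup>2) / 2"
  proof -
    have "(\<Sum>p\<in>K. (\<bar>x (fst p)\<bar> * sqrt (1/2))\<^sup>2) = (\<Sum>k<n. (\<bar>x k\<bar> * sqrt (1/2))\<^sup>2)"
      unfolding K_def by (rule sumK[OF j, where F="\<lambda>k _. (\<bar>x k\<bar> * sqrt (1/2))\<^sup>2"]) simp
    also have "\<dots> = (\<Sum>k<n. (x k)\<^sup>2 / 2)"
      by (rule sum.cong) (auto simp: power_mult_distrib)
    also have "\<dots> = (\<Sum>k<n. (x k)\<^sup>2) / 2" by (simp add: sum_divide_distrib)
    finally show ?thesis .
  qed
  show ?thesis using D unfolding e1 e2 .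
qed

lemma col_indep:
  fixes x :: "nat \<Rightarrow> real"
  shows "prob_space.indep_var (sketch_measure n) borel (\<lambda>P. \<Sum>k<n. x k * P (k,0))
           borel (\<lambda>P. \<Sum>k<n. x k * P (k,1))"
proof -
  interpret P: prob_space "sketch_measure n" by (rule prob_sketch)
  let ?A = "{..<n} \<times> {0::nat}" and ?B = "{..<n} \<times> {1::nat}"
  have i1: "P.indep_var (PiM ?A (\<lambda>_. borel)) (\<lambda>\<omega>. restrict (\<lambda>i. \<omega> i) ?A)
      (PiM ?B (\<lambda>_. borel)) (\<lambda>\<omega>. restrict (\<lambda>i. \<omega> i) ?B)"
    by (rule P.indep_var_restrict[OF indep_sk]) auto
  have m1: "(\<lambda>R. \<Sum>k<n. x k * R (k,0)) \<in> borel_measurable (PiM ?A (\<lambda>_. borel))"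
    by (intro borel_measurable_sum borel_measurable_times borel_measurable_const
        measurable_component_singleton) auto
  have m2: "(\<lambda>R. \<Sum>k<n. x k * R (k,1)) \<in> borel_measurable (PiM ?B (\<lambda>_. borel))"
    by (intro borel_measurable_sum borel_measurable_times borel_measurable_const
        measurable_component_singleton) auto
  have "P.indep_var borel ((\<lambda>R. \<Sum>k<n. x k * R (k,0)) \<circ> (\<lambda>\<omega>. restrict (\<lambda>i. \<omega> i) ?A))
      borel ((\<lambda>R. \<Sum>k<n. x k * R (k,1)) \<circ> (\<lambda>\<omega>. restrict (\<lambda>i. \<omega> i) ?B))"
    by (rule P.indep_var_compose[OF i1 m1 m2])
  moreover have "((\<lambda>R. \<Sum>k<n. x k * R (k,0)) \<circ> (\<lambda>\<omega>. restrict (\<lambda>i. \<omega> i) ?A)) = (\<lambda>P. \<Sum>k<n. x k * P (k,0))"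
    by (auto simp: fun_eq_iff intro!: sum.cong)
  moreover have "((\<lambda>R. \<Sum>k<n. x k * R (k,1)) \<circ> (\<lambda>\<omega>. restrict (\<lambda>i. \<omega> i) ?B)) = (\<lambda>P. \<Sum>k<n. x k * P (k,1))"
    by (auto simp: fun_eq_iff intro!: sum.cong)
  ultimately show ?thesis by simp
qed

lemma case_bool_same: "case_bool a a = (\<lambda>_. a)"
  by (rule ext) (simp split: bool.split)

lemma (in prob_space) disk_bound:
  fixes f g :: "real \<Rightarrow> real"
  assumes X: "distributed M lborel X (\<lambda>x. ennreal (f x))"
    and Y: "distributed M lborel Y (\<lambda>x. ennreal (g x))"
    and ind: "indep_var borel X borel Y"
    and fm: "\<And>x. f x \<le> m" and gm: "\<And>x. g x \<le> m"
    and f0: "\<And>x. 0 \<le> f x" and g0: "\<And>x. 0 \<le> g x" and s: "0 \<le> s"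
  shows "prob {\<omega> \<in> space M. (X \<omega>)\<^sup>2 + (Y \<omega>)\<^sup>2 \<le> s} \<le> m\<^sup>2 * pi * s"
proof -
  have m0: "0 \<le> m" using f0[of 0] fm[of 0] by simp
  have ind': "indep_var lborel X lborel Y"
    using ind unfolding indep_var_def indep_vars_def case_bool_same by simp
  have J: "distributed M (lborel \<Otimes>\<^sub>M lborel) (\<lambda>\<omega>. (X \<omega>, Y \<omega>))
      (\<lambda>(x,y). ennreal (f x) * ennreal (g y))"
    by (rule distributed_joint_indep[OF lborel.sigma_finite_measure_axioms
          lborel.sigma_finite_measure_axioms X Y ind'])
  define C where "C = cball (0::real\<times>real) (sqrt s)"
  have Cs: "C \<in> sets (lborel \<Otimes>\<^sub>M lborel)"
    unfolding C_def lborel_prod by simp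
  have eqset: "{\<omega> \<in> space M. (X \<omega>)\<^sup>2 + (Y \<omega>)\<^sup>2 \<le> s} = (\<lambda>\<omega>. (X \<omega>, Y \<omega>)) -` C \<inter> space M"
    by (auto simp: C_def norm_Pair real_sqrt_le_iff)
  have meas: "(\<lambda>\<omega>. (X \<omega>, Y \<omega>)) \<in> measurable M (lborel \<Otimes>\<^sub>M lborel)"
    using J by (rule distributed_measurable)
  have "emeasure M {\<omega> \<in> space M. (X \<omega>)\<^sup>2 + (Y \<omega>)\<^sup>2 \<le> s}
      = emeasure (distr M (lborel \<Otimes>\<^sub>M lborel) (\<lambda>\<omega>. (X \<omega>, Y \<omega>))) C"
    unfolding eqset by (rule emeasure_distr[OF meas Cs, symmetric])
  also have "\<dots> = emeasure (density (lborel \<Otimes>\<^sub>M lborel) (\<lambda>(x,y). ennreal (f x) * ennreal (g y))) C"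
    using J by (simp add: distributed_distr_eq_density)
  also have "\<dots> = (\<integral>\<^sup>+z. (\<lambda>(x,y). ennreal (f x) * ennreal (g y)) z * indicator C z \<partial>(lborel \<Otimes>\<^sub>M lborel))"
    by (rule emeasure_density[OF _ Cs]) (use J in \<open>simp add: distributed_borel_measurable\<close>)
  also have "\<dots> \<le> (\<integral>\<^sup>+z. ennreal (m\<^sup>2) * indicator C z \<partial>(lborel \<Otimes>\<^sub>M lborel))"
  proof (rule nn_integral_mono)
    fix z :: "real \<times> real"
    obtain a b where z: "z = (a,b)" by (cases z)
    have "ennreal (f a) * ennreal (g b) = ennreal (f a * g b)" using f0 g0 by (simp add: ennreal_mult)
    also have "\<dots> \<le> ennreal (m\<^sup>2)"
      using fm[of a] gm[of b] f0[of a] g0[of b] by (intro ennreal_leI) (simp add: power2_eq_square mult_mono)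
    finally show "(\<lambda>(x,y). ennreal (f x) * ennreal (g y)) z * indicator C z \<le> ennreal (m\<^sup>2) * indicator C z"
      by (auto simp: z indicator_def)
  qed
  also have "\<dots> = ennreal (m\<^sup>2) * emeasure (lborel \<Otimes>\<^sub>M lborel) C"
    by (rule nn_integral_cmult_indicator[OF Cs])
  also have "emeasure (lborel \<Otimes>\<^sub>M lborel) C = emeasure lborel C"
    by (simp add: lborel_prod)
  also have "\<dots> = ennreal (pi * s)"
    unfolding C_def using s by (subst emeasure_cball) (auto simp: unit_ball_vol_2)
  also have "ennreal (m\<^sup>2) * ennreal (pi * s) = ennreal (m\<^sup>2 * pi * s)"
    using s by (simp add: ennreal_mult[symmetric] mult.assoc)
  finally show ?thesis
    using s m0 by (simp add: emeasure_eq_measure ennreal_le_iff)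
qed

lemma tele:
  fixes Z h :: real
  assumes "0 \<le> h" "0 \<le> Z"
  shows "(\<Sum>l\<in>{1..N}. (if real l * h < Z then h else 0)) \<le> min (real N * h) Z"
proof (induction N)
  case 0
  then show ?case using assms by simp
next
  case (Suc N)
  have "(\<Sum>l\<in>{1..Suc N}. (if real l * h < Z then h else 0))
      = (\<Sum>l\<in>{1..N}. (if real l * h < Z then h else 0)) + (if real (Suc N) * h < Z then h else 0)"
    by (simp add: sum.cl_ivl_Suc)
  also have "\<dots> \<le> min (real (Suc N) * h) Z"
    using Suc.IH assms by (auto simp: algebra_simps min_def split: if_splits)
  finally show ?case .
qed

lemma gauss_sum_real: "(\<Sum>l\<in>{1..N}. real l) = real N * (real N + 1) / 2"
  by (induction N) (auto simp: sum.cl_ivl_Suc algebra_simps)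

lemma (in prob_space) cond_mean:
  fixes Z :: "'a \<Rightarrow> real"
  assumes Zm: "Z \<in> borel_measurable M" and Z0: "\<And>\<omega>. \<omega> \<in> space M \<Longrightarrow> 0 \<le> Z \<omega>"
    and Zi: "integrable M Z"
    and w: "0 < w" and cdf: "\<And>s. 0 \<le> s \<Longrightarrow> prob {\<omega>\<in>space M. Z \<omega> \<le> s} \<le> s / w"
    and A: "A \<in> events"
  shows "(19/40) * w * (prob A)\<^sup>2 \<le> expectation (\<lambda>\<omega>. Z \<omega> * indicator A \<omega>)"
proof -
  define q where "q = prob A"
  define h where "h = w * q / 20"
  have q0: "0 \<le> q" by (simp add: q_def)
  have h0: "0 \<le> h" using w q0 by (simp add: h_def)
  define E where "E l = A \<inter> {\<omega>\<in>space M. real l * h < Z \<omega>}" for l :: nat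
  have Ee: "E l \<in> events" for l unfolding E_def using A Zm by measurable
  have pE: "q - real l * h / w \<le> prob (E l)" for l
  proof -
    have "A \<subseteq> E l \<union> {\<omega>\<in>space M. Z \<omega> \<le> real l * h}"
      using sets.sets_into_space[OF A] by (auto simp: E_def)
    then have "prob A \<le> prob (E l \<union> {\<omega>\<in>space M. Z \<omega> \<le> real l * h})"
      using Ee Zm by (intro finite_measure_mono) auto
    also have "\<dots> \<le> prob (E l) + prob {\<omega>\<in>space M. Z \<omega> \<le> real l * h}"
      using Ee Zm by (intro measure_Un_le) auto
    also have "\<dots> \<le> prob (E l) + real l * h / w"
      using cdf[of "real l * h"] h0 by simp
    finally show ?thesis by (simp add: q_def)
  qed
  have pw: "(\<Sum>l\<in>{1..20::nat}. h * indicator (E l) \<omega>) \<le> Z \<omega> * indicator A \<omega>" if om: "\<omega> \<in> space M" for \<omega>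
  proof (cases "\<omega> \<in> A")
    case True
    have "(\<Sum>l\<in>{1..20::nat}. h * indicator (E l) \<omega>) = (\<Sum>l\<in>{1..20::nat}. (if real l * h < Z \<omega> then h else 0))"
      using True om by (intro sum.cong) (auto simp: E_def indicator_def)
    also have "\<dots> \<le> min (real 20 * h) (Z \<omega>)" by (rule tele[OF h0 Z0[OF om]])
    also have "\<dots> \<le> Z \<omega> * indicator A \<omega>" using True by simp
    finally show ?thesis .
  next
    case False
    then show ?thesis by (simp add: E_def indicator_def)
  qed
  have int1: "integrable M (\<lambda>\<omega>. \<Sum>l\<in>{1..20::nat}. h * indicator (E l) \<omega>)"
  proof (rule Bochner_Integration.integrable_sum)
    fix l :: nat
    have "integrable M (indicator (E l) :: 'a \<Rightarrow> real)"
      using Ee[of l] by (intro integrable_real_indicator) (auto simp: less_top[symmetric])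
    then show "integrable M (\<lambda>\<omega>. h * indicator (E l) \<omega>)" by (rule integrable_mult_right)
  qed
  have int2: "integrable M (\<lambda>\<omega>. Z \<omega> * indicator A \<omega>)"
    using A Zi by (intro integrable_real_mult_indicator) auto
  have "expectation (\<lambda>\<omega>. \<Sum>l\<in>{1..20::nat}. h * indicator (E l) \<omega>) = (\<Sum>l\<in>{1..20::nat}. h * prob (E l))"
  proof -
    have ii: "integrable M (indicator (E l) :: 'a \<Rightarrow> real)" for l
      using Ee[of l] by (intro integrable_real_indicator) (auto simp: less_top[symmetric])
    have "expectation (\<lambda>\<omega>. \<Sum>l\<in>{1..20::nat}. h * indicator (E l) \<omega>) = (\<Sum>l\<in>{1..20::nat}. expectation (\<lambda>\<omega>. h * indicator (E l) \<omega>))"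
      by (rule Bochner_Integration.integral_sum) (rule integrable_mult_right[OF ii])
    also have "\<dots> = (\<Sum>l\<in>{1..20::nat}. h * prob (E l))"
      using Ee by (intro sum.cong refl) simp
    finally show ?thesis .
  qed
  also have "\<dots> \<ge> (\<Sum>l\<in>{1..20::nat}. h * (q - real l * h / w))"
    using pE h0 by (intro sum_mono mult_left_mono) auto
  finally have "(\<Sum>l\<in>{1..20::nat}. h * (q - real l * h / w)) \<le> expectation (\<lambda>\<omega>. Z \<omega> * indicator A \<omega>)"
    using integral_mono[OF int1 int2 pw] by linarith
  moreover have "(\<Sum>l\<in>{1..20::nat}. h * (q - real l * h / w)) = 20 * h * q - h * h / w * (\<Sum>l\<in>{1..20::nat}. real l)"
    by (simp add: sum_subtractf sum_distrib_left algebra_simps)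
  moreover have "(\<Sum>l\<in>{1..20::nat}. real l) = 210" using gauss_sum_real[of 20] by simp
  moreover have "20 * h * q - h * h / w * 210 = (19/40) * w * q\<^sup>2"
    using w by (simp add: h_def field_simps power2_eq_square)
  ultimately show ?thesis by (simp add: q_def)
qed

definition colsum :: "nat \<Rightarrow> (nat \<Rightarrow> real) \<Rightarrow> nat \<Rightarrow> (nat \<times> nat \<Rightarrow> real) \<Rightarrow> real" where
  "colsum n x j P = (\<Sum>k<n. x k * P (k,j))"

definition rowZ :: "nat \<Rightarrow> (nat \<Rightarrow> real) \<Rightarrow> (nat \<times> nat \<Rightarrow> real) \<Rightarrow> real" where
  "rowZ n x P = (colsum n x 0 P)\<^sup>2 + (colsum n x 1 P)\<^sup>2"

lemma colsum_meas:
  assumes "j < 2"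
  shows "colsum n x j \<in> borel_measurable (sketch_measure n)"
proof -
  have "(\<lambda>P. \<Sum>k<n. x k * P (k,j)) \<in> borel_measurable (sketch_measure n)"
    by (rule borel_measurable_sum) (use assms in \<open>auto intro!: borel_measurable_times comp_meas_sk\<close>)
  then show ?thesis unfolding colsum_def[abs_def] .
qed

lemma colsum0_meas[measurable]: "colsum n x 0 \<in> borel_measurable (sketch_measure n)"
  by (rule colsum_meas) simp
lemma colsum1_meas[measurable]: "colsum n x 1 \<in> borel_measurable (sketch_measure n)"
  by (rule colsum_meas) simp

lemma rowZ_meas[measurable]: "rowZ n x \<in> borel_measurable (sketch_measure n)"
  unfolding rowZ_def[abs_def] by measurable

lemma rowZ_nonneg: "0 \<le> rowZ n x P"
  unfolding rowZ_def by simp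

lemma row_facts:
  fixes x :: "nat \<Rightarrow> real"
  shows "integrable (sketch_measure n) (rowZ n x)"
    and "integral\<^sup>L (sketch_measure n) (rowZ n x) = (\<Sum>k<n. (x k)\<^sup>2)"
    and "\<And>A. A \<in> sets (sketch_measure n) \<Longrightarrow>
          (19/40) * (\<Sum>k<n. (x k)\<^sup>2) * (measure (sketch_measure n) A)\<^sup>2
            \<le> integral\<^sup>L (sketch_measure n) (\<lambda>P. rowZ n x P * indicator A P)"
proof -
  interpret P: prob_space "sketch_measure n" by (rule prob_sketch)
  define r2 where "r2 = (\<Sum>k<n. (x k)\<^sup>2)"
  have r20: "0 \<le> r2" unfolding r2_def by (intro sum_nonneg) simp
  have all: "integrable (sketch_measure n) (rowZ n x) \<and> integral\<^sup>L (sketch_measure n) (rowZ n x) = r2 \<and>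
     (\<forall>A \<in> sets (sketch_measure n). (19/40) * r2 * (measure (sketch_measure n) A)\<^sup>2
            \<le> integral\<^sup>L (sketch_measure n) (\<lambda>P. rowZ n x P * indicator A P))"
  proof (cases "r2 = 0")
    case True
    then have "\<forall>k\<in>{..<n}. (x k)\<^sup>2 = 0"
      unfolding r2_def by (subst sum_nonneg_eq_0_iff[symmetric]) auto
    then have "\<And>P. rowZ n x P = 0" unfolding rowZ_def colsum_def by simp
    then have "rowZ n x = (\<lambda>_. 0)" by (rule ext)
    then show ?thesis using True by simp
  next
    case False
    with r20 have r2p: "0 < r2" by simp
    define \<sigma> where "\<sigma> = sqrt (r2 / 2)"
    have \<sigma>p: "0 < \<sigma>" using r2p by (simp add: \<sigma>_def)
    have \<sigma>2: "\<sigma>\<^sup>2 = r2 / 2" using r20 by (simp add: \<sigma>_def)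
    have D: "distributed (sketch_measure n) lborel (colsum n x j) (normal_density 0 \<sigma>)" if "j < 2" for j
      unfolding colsum_def[abs_def] \<sigma>_def r2_def
      by (rule row_normal[OF that]) (use r2p in \<open>simp add: r2_def\<close>)
    have sq: "integrable (sketch_measure n) (\<lambda>P. (colsum n x j P)\<^sup>2) \<and>
              integral\<^sup>L (sketch_measure n) (\<lambda>P. (colsum n x j P)\<^sup>2) = r2 / 2" if "j < 2" for j
    proof
      have "integrable lborel (\<lambda>t. normal_density 0 \<sigma> t * t\<^sup>2)"
        using integrable_normal_moment[where \<mu>=0 and \<sigma>=\<sigma> and k=2] \<sigma>p by simp
      then show "integrable (sketch_measure n) (\<lambda>P. (colsum n x j P)\<^sup>2)"
        using distributed_integrable[OF D[OF that], of "\<lambda>t. t\<^sup>2"] by simp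
      have "P.variance (colsum n x j) = \<sigma>\<^sup>2"
        by (rule P.normal_distributed_variance[OF \<sigma>p D[OF that]])
      moreover have "P.expectation (colsum n x j) = 0"
        by (rule P.normal_distributed_expectation[OF \<sigma>p D[OF that]])
      ultimately show "integral\<^sup>L (sketch_measure n) (\<lambda>P. (colsum n x j P)\<^sup>2) = r2 / 2"
        using \<sigma>2 by simp
    qed
    have int: "integrable (sketch_measure n) (rowZ n x)"
      unfolding rowZ_def[abs_def] using sq[of 0] sq[of 1] by simp
    have E: "integral\<^sup>L (sketch_measure n) (rowZ n x) = r2"
      unfolding rowZ_def[abs_def] using sq[of 0] sq[of 1] by simp
    define m where "m = 1 / sqrt (2 * pi * \<sigma>\<^sup>2)"
    have dm: "normal_density 0 \<sigma> t \<le> m" for t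
      unfolding normal_density_def m_def by (rule mult_left_le) auto
    have D0: "distributed (sketch_measure n) lborel (colsum n x 0) (normal_density 0 \<sigma>)" by (rule D) simp
    have D1: "distributed (sketch_measure n) lborel (colsum n x 1) (normal_density 0 \<sigma>)" by (rule D) simp
    have ci: "P.indep_var borel (colsum n x 0) borel (colsum n x 1)"
      unfolding colsum_def[abs_def] by (rule col_indep)
    have cdf: "P.prob {P \<in> space (sketch_measure n). rowZ n x P \<le> s} \<le> s / r2" if s: "0 \<le> s" for s
    proof -
      have "P.prob {P \<in> space (sketch_measure n). (colsum n x 0 P)\<^sup>2 + (colsum n x 1 P)\<^sup>2 \<le> s} \<le> m\<^sup>2 * pi * s"
        by (rule P.disk_bound[OF D0 D1 ci dm dm _ _ s])
           (auto simp: normal_density_nonneg)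
      also have "m\<^sup>2 * pi * s = s / r2"
        using \<sigma>2 r2p by (simp add: m_def power_divide)
      finally show ?thesis unfolding rowZ_def .
    qed
    have "(19/40) * r2 * (P.prob A)\<^sup>2 \<le> P.expectation (\<lambda>P. rowZ n x P * indicator A P)"
      if "A \<in> P.events" for A
      by (rule P.cond_mean[OF rowZ_meas _ int r2p cdf that]) (auto simp: rowZ_nonneg)
    then show ?thesis using int E by blast
  qed
  then show "integrable (sketch_measure n) (rowZ n x)"
    and "integral\<^sup>L (sketch_measure n) (rowZ n x) = (\<Sum>k<n. (x k)\<^sup>2)"
    and "\<And>A. A \<in> sets (sketch_measure n) \<Longrightarrow>
          (19/40) * (\<Sum>k<n. (x k)\<^sup>2) * (measure (sketch_measure n) A)\<^sup>2
            \<le> integral\<^sup>L (sketch_measure n) (\<lambda>P. rowZ n x P * indicator A P)"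
    unfolding r2_def by auto
qed

context prob_space begin

lemma lower_tail:
  fixes S :: "'a \<Rightarrow> real"
  assumes Sm: "S \<in> borel_measurable M" and S0: "\<And>\<omega>. \<omega> \<in> space M \<Longrightarrow> 0 \<le> S \<omega>"
    and Si: "integrable M S" and W0: "0 \<le> W"
    and cm: "\<And>A. A \<in> events \<Longrightarrow> (19/40) * W * (prob A)\<^sup>2 \<le> expectation (\<lambda>\<omega>. S \<omega> * indicator A \<omega>)"
    and e: "0 < e"
  shows "prob {\<omega> \<in> space M. S \<omega> < e * W} \<le> e * (40/19)"
proof (cases "W = 0")
  case True
  have eq: "{\<omega> \<in> space M. S \<omega> < e * W} = {}" using S0 True by force
  show ?thesis using e by (subst eq) simp
next
  case False
  with W0 have Wp: "0 < W" by simp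
  define A where "A = {\<omega> \<in> space M. S \<omega> < e * W}"
  have Ae: "A \<in> events" unfolding A_def using Sm by measurable
  define q where "q = prob A"
  have q0: "0 \<le> q" by (simp add: q_def)
  have "expectation (\<lambda>\<omega>. S \<omega> * indicator A \<omega>) \<le> expectation (\<lambda>\<omega>. (e * W) * indicator A \<omega>)"
  proof (rule integral_mono)
    show "integrable M (\<lambda>\<omega>. S \<omega> * indicator A \<omega>)"
      using Si Ae by (intro integrable_real_mult_indicator) auto
    have "integrable M (indicator A :: 'a \<Rightarrow> real)"
      using Ae by (intro integrable_real_indicator) (auto simp: less_top[symmetric])
    then show "integrable M (\<lambda>\<omega>. (e * W) * indicator A \<omega>)" by (rule integrable_mult_right)
    fix \<omega> assume "\<omega> \<in> space M"
    then show "S \<omega> * indicator A \<omega> \<le> (e * W) * indicator A \<omega>"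
      by (auto simp: A_def indicator_def)
  qed
  also have "\<dots> = e * W * q" using Ae by (simp add: q_def)
  finally have "(19/40) * W * q\<^sup>2 \<le> e * W * q" using cm[OF Ae] by (simp add: q_def)
  then have "(19/40) * q\<^sup>2 \<le> e * q" using Wp by (simp add: mult.commute mult.left_commute)
  then have "q \<le> e * (40/19)"
    using q0 e by (cases "q = 0") (auto simp: power2_eq_square mult_le_cancel_right)
  then show ?thesis by (simp add: q_def A_def)
qed

lemma upper_tail:
  fixes S :: "'a \<Rightarrow> real"
  assumes Sm: "S \<in> borel_measurable M" and S0: "\<And>\<omega>. \<omega> \<in> space M \<Longrightarrow> 0 \<le> S \<omega>"
    and Si: "integrable M S" and W0: "0 \<le> W" and EW: "expectation S = W"
    and cm: "\<And>A. A \<in> events \<Longrightarrow> (19/40) * W * (prob A)\<^sup>2 \<le> expectation (\<lambda>\<omega>. S \<omega> * indicator A \<omega>)"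
    and a: "6 \<le> a"
  shows "prob {\<omega> \<in> space M. a * W < S \<omega>} \<le> 103/1000"
proof (cases "W = 0")
  case True
  have "AE \<omega> in M. S \<omega> = 0"
    using integral_nonneg_eq_0_iff_AE[OF Si] S0 EW True by (auto intro: AE_I2)
  then have "AE \<omega> in M. \<omega> \<notin> {\<omega> \<in> space M. a * W < S \<omega>}"
    using True by auto
  moreover have Ge0: "{\<omega> \<in> space M. a * W < S \<omega>} \<in> events" using Sm by measurable
  ultimately have "prob {\<omega> \<in> space M. a * W < S \<omega>} = 0"
    using prob_eq_0[OF Ge0] by simp
  then show ?thesis by simp
next
  case False
  with W0 have Wp: "0 < W" by simp
  define G where "G = {\<omega> \<in> space M. a * W < S \<omega>}"
  have Ge: "G \<in> events" unfolding G_def using Sm by measurable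
  have Gce: "space M - G \<in> events" using Ge by auto
  define p where "p = prob G"
  have p0: "0 \<le> p" "p \<le> 1" by (auto simp: p_def)
  have iG: "integrable M (indicator G :: 'a \<Rightarrow> real)"
    using Ge by (intro integrable_real_indicator) (auto simp: less_top[symmetric])
  have int1: "integrable M (\<lambda>\<omega>. S \<omega> * indicator G \<omega>)"
    using Si Ge by (intro integrable_real_mult_indicator) auto
  have int2: "integrable M (\<lambda>\<omega>. S \<omega> * indicator (space M - G) \<omega>)"
    using Si Gce by (intro integrable_real_mult_indicator) auto
  have "expectation S = expectation (\<lambda>\<omega>. S \<omega> * indicator G \<omega> + S \<omega> * indicator (space M - G) \<omega>)"
    by (rule Bochner_Integration.integral_cong) (auto simp: indicator_def)
  also have "\<dots> = expectation (\<lambda>\<omega>. S \<omega> * indicator G \<omega>) + expectation (\<lambda>\<omega>. S \<omega> * indicator (space M - G) \<omega>)"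
    by (rule Bochner_Integration.integral_add[OF int1 int2])
  finally have split: "W = expectation (\<lambda>\<omega>. S \<omega> * indicator G \<omega>) + expectation (\<lambda>\<omega>. S \<omega> * indicator (space M - G) \<omega>)"
    using EW by simp
  have "expectation (\<lambda>\<omega>. (a * W) * indicator G \<omega>) \<le> expectation (\<lambda>\<omega>. S \<omega> * indicator G \<omega>)"
  proof (rule integral_mono)
    show "integrable M (\<lambda>\<omega>. (a * W) * indicator G \<omega>)" by (rule integrable_mult_right[OF iG])
    show "integrable M (\<lambda>\<omega>. S \<omega> * indicator G \<omega>)" by (rule int1)
    fix \<omega> assume "\<omega> \<in> space M"
    then show "(a * W) * indicator G \<omega> \<le> S \<omega> * indicator G \<omega>"
      by (auto simp: G_def indicator_def)
  qed
  then have e1: "a * W * p \<le> expectation (\<lambda>\<omega>. S \<omega> * indicator G \<omega>)"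
    using Ge by (simp add: p_def)
  have e2: "(19/40) * W * (1 - p)\<^sup>2 \<le> expectation (\<lambda>\<omega>. S \<omega> * indicator (space M - G) \<omega>)"
    using cm[OF Gce] prob_compl[OF Ge] by (simp add: p_def)
  have "6 * W * p \<le> a * W * p" using a Wp p0 by (intro mult_right_mono) auto
  with split e1 e2 have "6 * W * p + (19/40) * W * (1 - p)\<^sup>2 \<le> W" by linarith
  then have "W * (6 * p + (19/40) * (1 - p)\<^sup>2) \<le> W * 1" by (simp add: algebra_simps)
  then have key: "6 * p + (19/40) * (1 - p)\<^sup>2 \<le> 1" using Wp by (simp add: mult_le_cancel_left)
  have "p \<le> 103/1000"
  proof (rule ccontr)
    assume "\<not> p \<le> 103/1000"
    then have "103/1000 < p" by simp
    then have pp: "(103/1000) * p \<le> p * p" by (intro mult_right_mono) auto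
    have "6 * p + (19/40) * (1 - p)\<^sup>2 = 6 * p + 19/40 - (19/20) * p + (19/40) * (p * p)"
      by (simp add: power2_eq_square field_simps)
    with pp \<open>103/1000 < p\<close> have "6 * p + (19/40) * (1 - p)\<^sup>2 > 1" by linarith
    with key show False by simp
  qed
  then show ?thesis by (simp add: p_def G_def)
qed

end

definition Sfun :: "nat \<Rightarrow> (nat \<Rightarrow> nat \<Rightarrow> real) \<Rightarrow> (nat \<times> nat \<Rightarrow> real) \<Rightarrow> real" where
  "Sfun n X P = (\<Sum>i<n. rowZ n (X i) P)"

definition Wf :: "nat \<Rightarrow> (nat \<Rightarrow> nat \<Rightarrow> real) \<Rightarrow> real" where
  "Wf n X = (\<Sum>i<n. \<Sum>k<n. (X i k)\<^sup>2)"

lemma Sfun_meas[measurable]: "Sfun n X \<in> borel_measurable (sketch_measure n)"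
  unfolding Sfun_def[abs_def] by (rule borel_measurable_sum) simp

lemma Sfun_nonneg: "0 \<le> Sfun n X P"
  unfolding Sfun_def by (intro sum_nonneg rowZ_nonneg)

lemma Wf_nonneg: "0 \<le> Wf n X"
  unfolding Wf_def by (intro sum_nonneg) simp

lemma S_facts:
  shows "integrable (sketch_measure n) (Sfun n X)"
    and "integral\<^sup>L (sketch_measure n) (Sfun n X) = Wf n X"
    and "\<And>A. A \<in> sets (sketch_measure n) \<Longrightarrow>
          (19/40) * Wf n X * (measure (sketch_measure n) A)\<^sup>2
            \<le> integral\<^sup>L (sketch_measure n) (\<lambda>P. Sfun n X P * indicator A P)"
proof -
  show int: "integrable (sketch_measure n) (Sfun n X)"
    unfolding Sfun_def[abs_def] by (rule Bochner_Integration.integrable_sum) (rule row_facts(1))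
  show "integral\<^sup>L (sketch_measure n) (Sfun n X) = Wf n X"
    unfolding Sfun_def[abs_def] Wf_def
    by (subst Bochner_Integration.integral_sum) (auto intro: row_facts(1) simp: row_facts(2))
  fix A assume A: "A \<in> sets (sketch_measure n)"
  have ii: "integrable (sketch_measure n) (\<lambda>P. rowZ n (X i) P * indicator A P)" for i
    using A by (intro integrable_real_mult_indicator row_facts(1)) auto
  have "integral\<^sup>L (sketch_measure n) (\<lambda>P. Sfun n X P * indicator A P)
      = integral\<^sup>L (sketch_measure n) (\<lambda>P. \<Sum>i<n. rowZ n (X i) P * indicator A P)"
    unfolding Sfun_def by (simp add: sum_distrib_right)
  also have "\<dots> = (\<Sum>i<n. integral\<^sup>L (sketch_measure n) (\<lambda>P. rowZ n (X i) P * indicator A P))"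
    by (rule Bochner_Integration.integral_sum) (rule ii)
  also have "\<dots> \<ge> (\<Sum>i<n. (19/40) * (\<Sum>k<n. (X i k)\<^sup>2) * (measure (sketch_measure n) A)\<^sup>2)"
    by (intro sum_mono row_facts(3) A)
  finally show "(19/40) * Wf n X * (measure (sketch_measure n) A)\<^sup>2
            \<le> integral\<^sup>L (sketch_measure n) (\<lambda>P. Sfun n X P * indicator A P)"
    unfolding Wf_def by (simp add: sum_distrib_left sum_distrib_right)
qed

lemma frob_sk:
  "frob n 2 (\<lambda>i j. apply_sketch n A P i j - apply_sketch n B P i j)
     = sqrt (Sfun n (\<lambda>i k. A i k - B i k) P)"
proof -
  have e: "apply_sketch n A P i j - apply_sketch n B P i j = colsum n (\<lambda>k. A i k - B i k) j P" for i j
    unfolding apply_sketch_def colsum_def by (simp add: sum_subtractf left_diff_distrib)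
  show ?thesis
    unfolding frob_def e Sfun_def rowZ_def by (simp add: numeral_2_eq_2)
qed

lemma frob_W: "frob n n (\<lambda>i j. A i j - B i j) = sqrt (Wf n (\<lambda>i k. A i k - B i k))"
  unfolding frob_def Wf_def by simp

lemma se_eq: "single_estimate n F A P =
   sqrt (6 * real (card F)) * Min ((\<lambda>B. sqrt (Sfun n (\<lambda>i k. A i k - B i k) P)) ` F)"
  unfolding single_estimate_def frob_sk ..

lemma se_meas[measurable]:
  assumes "finite F"
  shows "single_estimate n F A \<in> borel_measurable (sketch_measure n)"
proof -
  have "(\<lambda>P. sqrt (6 * real (card F)) * Min ((\<lambda>B. sqrt (Sfun n (\<lambda>i k. A i k - B i k) P)) ` F))
      \<in> borel_measurable (sketch_measure n)"
    using assms by measurable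
  then show ?thesis unfolding se_eq[abs_def] .
qed

lemma trial_bad:
  fixes n :: nat and A :: "nat \<Rightarrow> nat \<Rightarrow> real" and F :: "(nat \<Rightarrow> nat \<Rightarrow> real) set"
  assumes fin: "finite F" and ne: "F \<noteq> {}"
  defines "OPT \<equiv> Min ((\<lambda>B. frob n n (\<lambda>i j. A i j - B i j)) ` F)"
  shows "{P \<in> space (sketch_measure n). \<not> (OPT \<le> single_estimate n F A P \<and>
            single_estimate n F A P \<le> 6 * real (card F) * OPT)} \<in> sets (sketch_measure n)"
    and "measure (sketch_measure n) {P \<in> space (sketch_measure n). \<not> (OPT \<le> single_estimate n F A P \<and>
            single_estimate n F A P \<le> 6 * real (card F) * OPT)} \<le> 23/50"
proof -
  interpret P: prob_space "sketch_measure n" by (rule prob_sketch)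
  show bad_meas: "{P \<in> space (sketch_measure n). \<not> (OPT \<le> single_estimate n F A P \<and>
            single_estimate n F A P \<le> 6 * real (card F) * OPT)} \<in> sets (sketch_measure n)"
    using fin by measurable
  define X where "X B = (\<lambda>i k. A i k - B i k)" for B :: "nat \<Rightarrow> nat \<Rightarrow> real"
  define S where "S B = Sfun n (X B)" for B
  define W where "W B = Wf n (X B)" for B
  define k where "k = real (card F)"
  have k1: "1 \<le> k" using fin ne by (simp add: k_def Suc_le_eq card_gt_0_iff)
  have se: "single_estimate n F A P = sqrt (6 * k) * Min ((\<lambda>B. sqrt (S B P)) ` F)" for P
    unfolding se_eq S_def X_def k_def ..
  have OPTeq: "OPT = Min ((\<lambda>B. sqrt (W B)) ` F)"
    unfolding OPT_def frob_W W_def X_def ..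
  have "OPT \<in> (\<lambda>B. sqrt (W B)) ` F" unfolding OPTeq using fin ne by (intro Min_in) auto
  then obtain Bs where Bs: "Bs \<in> F" "OPT = sqrt (W Bs)" by blast
  have Wnn: "0 \<le> W B" for B unfolding W_def by (rule Wf_nonneg)
  have Snn: "0 \<le> S B P" for B P unfolding S_def by (rule Sfun_nonneg)
  have sub: "{P \<in> space (sketch_measure n). \<not> (OPT \<le> single_estimate n F A P \<and>
            single_estimate n F A P \<le> 6 * real (card F) * OPT)}
      \<subseteq> (\<Union>B\<in>F. {P \<in> space (sketch_measure n). S B P < (1 / (6 * k)) * W B})
         \<union> {P \<in> space (sketch_measure n). (6 * k) * W Bs < S Bs P}"
  proof
    fix P assume "P \<in> {P \<in> space (sketch_measure n). \<not> (OPT \<le> single_estimate n F A P \<and>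
            single_estimate n F A P \<le> 6 * real (card F) * OPT)}"
    then have Psp: "P \<in> space (sketch_measure n)"
      and bad: "\<not> (OPT \<le> sqrt (6 * k) * Min ((\<lambda>B. sqrt (S B P)) ` F) \<and>
            sqrt (6 * k) * Min ((\<lambda>B. sqrt (S B P)) ` F) \<le> 6 * k * OPT)"
      unfolding se k_def by auto
    define m where "m = Min ((\<lambda>B. sqrt (S B P)) ` F)"
    have "m \<in> (\<lambda>B. sqrt (S B P)) ` F" unfolding m_def using fin ne by (intro Min_in) auto
    then obtain B0 where B0: "B0 \<in> F" "m = sqrt (S B0 P)" by blast
    have mle: "m \<le> sqrt (S Bs P)" unfolding m_def using fin Bs(1) by (intro Min_le) auto
    have OPTle: "OPT \<le> sqrt (W B0)" unfolding OPTeq using fin B0(1) by (intro Min_le) auto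
    show "P \<in> (\<Union>B\<in>F. {P \<in> space (sketch_measure n). S B P < (1 / (6 * k)) * W B})
         \<union> {P \<in> space (sketch_measure n). (6 * k) * W Bs < S Bs P}"
    proof (cases "OPT \<le> sqrt (6 * k) * m")
      case False
      then have "sqrt (6 * k * S B0 P) < sqrt (W B0)"
        using OPTle B0(2) by (simp add: real_sqrt_mult)
      then have "6 * k * S B0 P < W B0" by simp
      then have "S B0 P < (1 / (6 * k)) * W B0" using k1 by (simp add: field_simps)
      then show ?thesis using B0(1) Psp by blast
    next
      case True
      with bad have "6 * k * OPT < sqrt (6 * k) * m" unfolding m_def by simp
      also have "\<dots> \<le> sqrt (6 * k) * sqrt (S Bs P)" using mle k1 by (intro mult_left_mono) auto
      also have "\<dots> = sqrt (6 * k * S Bs P)" by (simp add: real_sqrt_mult)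
      also have "6 * k * OPT = sqrt ((6 * k)\<^sup>2 * W Bs)"
        using Bs(2) k1 by (simp add: real_sqrt_mult)
      finally have "(6 * k)\<^sup>2 * W Bs < 6 * k * S Bs P" by simp
      then have "(6 * k) * ((6 * k) * W Bs) < (6 * k) * S Bs P" by (simp add: power2_eq_square mult.assoc)
      then have "(6 * k) * W Bs < S Bs P" using k1 by (simp add: mult_less_cancel_left)
      then show ?thesis using Psp by blast
    qed
  qed
  have Se: "{P \<in> space (sketch_measure n). S B P < (1 / (6 * k)) * W B} \<in> sets (sketch_measure n)" for B
    unfolding S_def by measurable
  have Se2: "{P \<in> space (sketch_measure n). (6 * k) * W Bs < S Bs P} \<in> sets (sketch_measure n)"
    unfolding S_def by measurable
  have UE: "(\<Union>B\<in>F. {P \<in> space (sketch_measure n). S B P < (1 / (6 * k)) * W B}) \<in> sets (sketch_measure n)"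
    by (rule sets.finite_UN[OF fin]) (rule Se)
  have low: "P.prob {P \<in> space (sketch_measure n). S B P < (1 / (6 * k)) * W B} \<le> (1 / (6 * k)) * (40/19)" for B
    unfolding S_def W_def
    by (rule P.lower_tail[OF Sfun_meas Sfun_nonneg S_facts(1) Wf_nonneg S_facts(3)]) (use k1 in auto)
  have up: "P.prob {P \<in> space (sketch_measure n). (6 * k) * W Bs < S Bs P} \<le> 103/1000"
    unfolding S_def W_def
    by (rule P.upper_tail[OF Sfun_meas Sfun_nonneg S_facts(1) Wf_nonneg S_facts(2) S_facts(3)]) (use k1 in auto)
  have "P.prob {P \<in> space (sketch_measure n). \<not> (OPT \<le> single_estimate n F A P \<and>
            single_estimate n F A P \<le> 6 * real (card F) * OPT)}
      \<le> P.prob ((\<Union>B\<in>F. {P \<in> space (sketch_measure n). S B P < (1 / (6 * k)) * W B})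
         \<union> {P \<in> space (sketch_measure n). (6 * k) * W Bs < S Bs P})"
    using sub UE Se2 by (intro P.finite_measure_mono) auto
  also have "\<dots> \<le> P.prob (\<Union>B\<in>F. {P \<in> space (sketch_measure n). S B P < (1 / (6 * k)) * W B})
         + P.prob {P \<in> space (sketch_measure n). (6 * k) * W Bs < S Bs P}"
    using UE Se2 by (intro measure_Un_le) auto
  also have "\<dots> \<le> (\<Sum>B\<in>F. P.prob {P \<in> space (sketch_measure n). S B P < (1 / (6 * k)) * W B})
         + P.prob {P \<in> space (sketch_measure n). (6 * k) * W Bs < S Bs P}"
    using Se fin by (simp add: P.finite_measure_subadditive_finite image_subset_iff)
  also have "\<dots> \<le> (\<Sum>B\<in>F. (1 / (6 * k)) * (40/19)) + 103/1000"
    by (intro add_mono sum_mono low up)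
  also have "\<dots> = k * ((1 / (6 * k)) * (40/19)) + 103/1000" by (simp add: k_def)
  also have "\<dots> \<le> 23/50" using k1 by simp
  finally show "measure (sketch_measure n) {P \<in> space (sketch_measure n). \<not> (OPT \<le> single_estimate n F A P \<and>
            single_estimate n F A P \<le> 6 * real (card F) * OPT)} \<le> 23/50" .
qed

lemma sorted_lt_iff:
  fixes ys :: "real list"
  assumes s: "sorted ys" and m: "m < length ys"
  shows "ys ! m < a \<longleftrightarrow> m < card {i. i < length ys \<and> ys ! i < a}"
proof
  assume h: "ys ! m < a"
  have "{..m} \<subseteq> {i. i < length ys \<and> ys ! i < a}"
  proof
    fix i assume "i \<in> {..m}"
    then have "i \<le> m" by simp
    then have "ys ! i \<le> ys ! m" using sorted_nth_mono[OF s _ m] by simp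
    then show "i \<in> {i. i < length ys \<and> ys ! i < a}" using h m \<open>i \<le> m\<close> by simp
  qed
  then have "card {..m} \<le> card {i. i < length ys \<and> ys ! i < a}" by (intro card_mono) auto
  then show "m < card {i. i < length ys \<and> ys ! i < a}" by simp
next
  assume h: "m < card {i. i < length ys \<and> ys ! i < a}"
  have "\<not> {i. i < length ys \<and> ys ! i < a} \<subseteq> {..<m}"
  proof
    assume "{i. i < length ys \<and> ys ! i < a} \<subseteq> {..<m}"
    then have "card {i. i < length ys \<and> ys ! i < a} \<le> card {..<m}" by (intro card_mono) auto
    with h show False by simp
  qed
  then obtain i where "i \<in> {i. i < length ys \<and> ys ! i < a}" "i \<notin> {..<m}" by blast
  then have i: "i < length ys" "ys ! i < a" "m \<le> i" by auto
  then show "ys ! m < a" using sorted_nth_mono[OF s \<open>m \<le> i\<close> \<open>i < length ys\<close>] by simp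
qed

lemma sorted_gt_iff:
  fixes ys :: "real list"
  assumes s: "sorted ys" and m: "m < length ys"
  shows "u < ys ! m \<longleftrightarrow> length ys - m \<le> card {i. i < length ys \<and> u < ys ! i}"
proof
  assume h: "u < ys ! m"
  have "{m..<length ys} \<subseteq> {i. i < length ys \<and> u < ys ! i}"
  proof
    fix i assume "i \<in> {m..<length ys}"
    then have "m \<le> i" "i < length ys" by auto
    then have "ys ! m \<le> ys ! i" using sorted_nth_mono[OF s] by simp
    then show "i \<in> {i. i < length ys \<and> u < ys ! i}" using h \<open>i < length ys\<close> by simp
  qed
  then have "card {m..<length ys} \<le> card {i. i < length ys \<and> u < ys ! i}" by (intro card_mono) auto
  then show "length ys - m \<le> card {i. i < length ys \<and> u < ys ! i}" by simp
next
  assume h: "length ys - m \<le> card {i. i < length ys \<and> u < ys ! i}"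
  show "u < ys ! m"
  proof (rule ccontr)
    assume "\<not> u < ys ! m"
    then have um: "ys ! m \<le> u" by simp
    have "{i. i < length ys \<and> u < ys ! i} \<subseteq> {Suc m..<length ys}"
    proof
      fix i assume i: "i \<in> {i. i < length ys \<and> u < ys ! i}"
      have "\<not> i \<le> m"
      proof
        assume "i \<le> m"
        then have "ys ! i \<le> ys ! m" using sorted_nth_mono[OF s _ m] by simp
        with um i show False by simp
      qed
      then show "i \<in> {Suc m..<length ys}" using i by simp
    qed
    then have "card {i. i < length ys \<and> u < ys ! i} \<le> card {Suc m..<length ys}" by (intro card_mono) auto
    with h m show False by simp
  qed
qed

lemma card_sort:
  "card {i. i < length (sort xs) \<and> P (sort xs ! i)} = card {i. i < length xs \<and> P (xs ! i)}"
  by (metis length_filter_conv_card mset_filter mset_sort size_mset)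

lemma median_iff:
  fixes xs :: "real list"
  assumes ne: "xs \<noteq> []"
  shows "(a \<le> median xs \<and> median xs \<le> u) \<longleftrightarrow>
    (card {i. i < length xs \<and> xs ! i < a} \<le> length xs div 2 \<and>
     card {i. i < length xs \<and> u < xs ! i} < length xs - length xs div 2)"
proof -
  let ?ys = "sort xs" and ?m = "length xs div 2"
  have s: "sorted ?ys" by simp
  have m: "?m < length ?ys" using ne by simp
  have 1: "a \<le> ?ys ! ?m \<longleftrightarrow> card {i. i < length xs \<and> xs ! i < a} \<le> ?m"
    using sorted_lt_iff[OF s m, of a] card_sort[of xs "\<lambda>x. x < a"] by auto
  have 2: "?ys ! ?m \<le> u \<longleftrightarrow> card {i. i < length xs \<and> u < xs ! i} < length xs - ?m"
    using sorted_gt_iff[OF s m, of u] card_sort[of xs "\<lambda>x. u < x"] by auto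
  show ?thesis unfolding median_def using 1 2 by simp
qed

lemma card_as_sum: "real (card {i. i < (t::nat) \<and> Q i}) = (\<Sum>i<t. if Q i then 1 else (0::real))"
proof -
  have e: "{i. i < t \<and> Q i} = {i\<in>{..<t}. Q i}" by auto
  have "real (card {i\<in>{..<t}. Q i}) = (\<Sum>i\<in>{i\<in>{..<t}. Q i}. 1)" by simp
  also have "\<dots> = (\<Sum>i<t. if Q i then 1 else (0::real))" by (rule sum.inter_filter) simp
  finally show ?thesis unfolding e .
qed

lemma prob_trials: "prob_space (trials n t)"
  unfolding trials_def by (intro prob_space_PiM prob_sketch)

lemma comp_trials: "i < t \<Longrightarrow> (\<lambda>\<omega>. \<omega> i) \<in> measurable (trials n t) (sketch_measure n)"
  unfolding trials_def by (rule measurable_component_singleton) simp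

lemma space_trials_comp: "\<omega> \<in> space (trials n t) \<Longrightarrow> i < t \<Longrightarrow> \<omega> i \<in> space (sketch_measure n)"
  unfolding trials_def by (auto simp: space_PiM PiE_def Pi_def)

lemma cnt_meas:
  assumes "\<And>i. i < t \<Longrightarrow> {\<omega> \<in> space (trials n t). Q i \<omega>} \<in> sets (trials n t)"
  shows "(\<lambda>\<omega>. real (card {i. i < t \<and> Q i \<omega>})) \<in> borel_measurable (trials n t)"
proof -
  have "(\<lambda>\<omega>. \<Sum>i<t. indicator {\<omega> \<in> space (trials n t). Q i \<omega>} \<omega> :: real) \<in> borel_measurable (trials n t)"
    by (rule borel_measurable_sum) (use assms in auto)
  moreover have "\<And>\<omega>. \<omega> \<in> space (trials n t) \<Longrightarrow>
     real (card {i. i < t \<and> Q i \<omega>}) = (\<Sum>i<t. indicator {\<omega> \<in> space (trials n t). Q i \<omega>} \<omega> :: real)"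
    unfolding card_as_sum by (intro sum.cong) (auto simp: indicator_def)
  ultimately show ?thesis using measurable_cong by (smt (verit, ccfv_threshold))
qed

lemma main_prob:
  fixes n t :: nat and F :: "(nat \<Rightarrow> nat \<Rightarrow> real) set" and A :: "nat \<Rightarrow> nat \<Rightarrow> real"
  assumes fin: "finite F" and ne: "F \<noteq> {}" and t0: "0 < t"
  defines "OPT \<equiv> Min ((\<lambda>B. frob n n (\<lambda>i j. A i j - B i j)) ` F)"
  shows "measure (trials n t)
          {\<omega> \<in> space (trials n t).
             OPT \<le> coarse_output n F A t \<omega> \<and>
             coarse_output n F A t \<omega> \<le> 6 * real (card F) * OPT} \<ge> 1 - exp (- 2 * real t / 625)"
proof -
  define U where "U = 6 * real (card F) * OPT"
  define se where "se = single_estimate n F A"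
  define bset where "bset = {P \<in> space (sketch_measure n). \<not> (OPT \<le> single_estimate n F A P \<and>
            single_estimate n F A P \<le> 6 * real (card F) * OPT)}"
  have bmeas: "bset \<in> sets (sketch_measure n)" unfolding bset_def OPT_def by (rule trial_bad(1)[OF fin ne])
  have bprob: "measure (sketch_measure n) bset \<le> 23/50" unfolding bset_def OPT_def by (rule trial_bad(2)[OF fin ne])
  let ?M = "trials n t"
  interpret T: prob_space ?M by (rule prob_trials)
  define b where "b i \<omega> = (indicator bset (\<omega> i) :: real)" for i :: nat and \<omega> :: "nat \<Rightarrow> nat \<times> nat \<Rightarrow> real"
  have ind0: "T.indep_vars (\<lambda>_. sketch_measure n) (\<lambda>i \<omega>. \<omega> i) {..<t}"
    unfolding trials_def by (rule indep_coords) (rule prob_sketch)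
  have ind: "T.indep_vars (\<lambda>_. borel) b {..<t}"
    unfolding b_def by (rule T.indep_vars_compose2[OF ind0]) (use bmeas in simp)
  have Eb: "T.expectation (b i) = measure (sketch_measure n) bset" if "i < t" for i
  proof -
    have "T.expectation (b i) = integral\<^sup>L (distr ?M (sketch_measure n) (\<lambda>\<omega>. \<omega> i)) (indicator bset)"
      unfolding b_def by (rule integral_distr[OF comp_trials[OF that], symmetric]) (use bmeas in simp)
    also have "distr ?M (sketch_measure n) (\<lambda>\<omega>. \<omega> i) = sketch_measure n"
      unfolding trials_def using that by (intro distr_PiM_component prob_sketch) auto
    finally show ?thesis using bmeas by simp
  qed
  define \<mu> where "\<mu> = (\<Sum>i\<in>{..<t}. T.expectation (b i))"
  interpret H: Hoeffding_ineq ?M "{..<t}" b "\<lambda>_. 0" "\<lambda>_. 1" \<mu>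
  proof unfold_locales
    show "finite {..<t}" by simp
    show "T.indep_vars (\<lambda>_. borel) b {..<t}" by (rule ind)
    fix i assume "i \<in> {..<t}"
    show "AE x in ?M. b i x \<in> {0..1}" by (intro AE_I2) (simp add: b_def indicator_def)
  qed (simp add: \<mu>_def)
  have mu: "\<mu> \<le> real t * (23/50)"
  proof -
    have "\<mu> \<le> (\<Sum>i\<in>{..<t}. 23/50)" unfolding \<mu>_def using Eb bprob by (intro sum_mono) auto
    then show ?thesis by simp
  qed
  have hoeff: "T.prob {x \<in> space ?M. (\<Sum>i\<in>{..<t}. b i x) \<ge> \<mu> + real t / 25}
      \<le> exp (-2 * (real t / 25)\<^sup>2 / (\<Sum>i\<in>{..<t}. ((1::real) - 0)\<^sup>2))"
    by (rule H.Hoeffding_ineq_ge) (use t0 in auto)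
  have ex: "exp (-2 * (real t / 25)\<^sup>2 / (\<Sum>i\<in>{..<t}. ((1::real) - 0)\<^sup>2)) = exp (- 2 * real t / 625)"
    using t0 by (simp add: power2_eq_square)
  define G where "G = {\<omega> \<in> space ?M. 2 * (\<Sum>i\<in>{..<t}. b i \<omega>) < real t}"
  have Gm: "G \<in> sets ?M"
  proof -
    have "(\<lambda>\<omega>. \<Sum>i\<in>{..<t}. b i \<omega>) \<in> borel_measurable ?M"
      unfolding b_def
      by (rule borel_measurable_sum) (auto intro!: measurable_compose[OF comp_trials] borel_measurable_indicator bmeas)
    then show ?thesis unfolding G_def by measurable
  qed
  have Gc: "space ?M - G \<subseteq> {x \<in> space ?M. (\<Sum>i\<in>{..<t}. b i x) \<ge> \<mu> + real t / 25}"
    using mu by (auto simp: G_def)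
  have Hm: "{x \<in> space ?M. (\<Sum>i\<in>{..<t}. b i x) \<ge> \<mu> + real t / 25} \<in> sets ?M"
  proof -
    have "(\<lambda>\<omega>. \<Sum>i\<in>{..<t}. b i \<omega>) \<in> borel_measurable ?M"
      unfolding b_def
      by (rule borel_measurable_sum) (auto intro!: measurable_compose[OF comp_trials] borel_measurable_indicator bmeas)
    then show ?thesis by measurable
  qed
  have PG: "T.prob G \<ge> 1 - exp (- 2 * real t / 625)"
  proof -
    have ex0: "(\<Sum>i\<in>{..<t}. ((1::real) - 0)\<^sup>2) = real t" by simp
    have ex1: "-2 * (real t / 25)\<^sup>2 / real t = - 2 * real t / 625"
      using t0 by (simp add: power2_eq_square field_simps)
    have "T.prob (space ?M - G) \<le> exp (-2 * (real t / 25)\<^sup>2 / (\<Sum>i\<in>{..<t}. ((1::real) - 0)\<^sup>2))"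
      by (rule order_trans[OF T.finite_measure_mono[OF Gc Hm] hoeff])
    also have "\<dots> = exp (- 2 * real t / 625)" unfolding ex0 ex1 ..
    finally have "T.prob (space ?M - G) \<le> exp (- 2 * real t / 625)" .
    then show ?thesis using T.prob_compl[OF Gm] by simp
  qed
  define cl where "cl \<omega> = card {i. i < t \<and> se (\<omega> i) < OPT}" for \<omega>
  define cg where "cg \<omega> = card {i. i < t \<and> U < se (\<omega> i)}" for \<omega>
  have Tchar: "{\<omega> \<in> space ?M. OPT \<le> coarse_output n F A t \<omega> \<and> coarse_output n F A t \<omega> \<le> U}
     = {\<omega> \<in> space ?M. real (cl \<omega>) \<le> real (t div 2) \<and> real (cg \<omega>) < real (t - t div 2)}"
  proof (rule Collect_cong)
    fix \<omega>
    let ?xs = "map (\<lambda>i. single_estimate n F A (\<omega> i)) [0..<t]"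
    have ne: "?xs \<noteq> []" using t0 by simp
    have l: "length ?xs = t" by simp
    have c1: "{i. i < t \<and> ?xs ! i < OPT} = {i. i < t \<and> se (\<omega> i) < OPT}"
      by (auto simp: se_def)
    have c2: "{i. i < t \<and> U < ?xs ! i} = {i. i < t \<and> U < se (\<omega> i)}"
      by (auto simp: se_def)
    have "(OPT \<le> coarse_output n F A t \<omega> \<and> coarse_output n F A t \<omega> \<le> U) \<longleftrightarrow>
        (cl \<omega> \<le> t div 2 \<and> cg \<omega> < t - t div 2)"
      unfolding coarse_output_def median_iff[OF ne] l c1 c2 cl_def cg_def ..
    then show "(\<omega> \<in> space ?M \<and> OPT \<le> coarse_output n F A t \<omega> \<and> coarse_output n F A t \<omega> \<le> U) \<longleftrightarrow>
        (\<omega> \<in> space ?M \<and> real (cl \<omega>) \<le> real (t div 2) \<and> real (cg \<omega>) < real (t - t div 2))"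
      by (simp only: of_nat_le_iff of_nat_less_iff)
  qed
  have sem: "i < t \<Longrightarrow> (\<lambda>\<omega>. se (\<omega> i)) \<in> borel_measurable ?M" for i
    unfolding se_def by (rule measurable_compose[OF comp_trials se_meas[OF fin]])
  have clm: "(\<lambda>\<omega>. real (cl \<omega>)) \<in> borel_measurable ?M"
    unfolding cl_def by (rule cnt_meas) (use sem in measurable)
  have cgm: "(\<lambda>\<omega>. real (cg \<omega>)) \<in> borel_measurable ?M"
    unfolding cg_def by (rule cnt_meas) (use sem in measurable)
  have Tm: "{\<omega> \<in> space ?M. real (cl \<omega>) \<le> real (t div 2) \<and> real (cg \<omega>) < real (t - t div 2)} \<in> sets ?M"
    using clm cgm by measurable
  have GT: "G \<subseteq> {\<omega> \<in> space ?M. real (cl \<omega>) \<le> real (t div 2) \<and> real (cg \<omega>) < real (t - t div 2)}"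
  proof
    fix \<omega> assume "\<omega> \<in> G"
    then have om: "\<omega> \<in> space ?M" and h: "2 * (\<Sum>i\<in>{..<t}. b i \<omega>) < real t" by (auto simp: G_def)
    define nb where "nb = card {i. i < t \<and> \<omega> i \<in> bset}"
    have "(\<Sum>i\<in>{..<t}. b i \<omega>) = real nb"
      unfolding nb_def card_as_sum b_def by (intro sum.cong) (auto simp: indicator_def)
    with h have nb2: "2 * nb < t" by linarith
    have sub1: "{i. i < t \<and> se (\<omega> i) < OPT} \<subseteq> {i. i < t \<and> \<omega> i \<in> bset}"
      using space_trials_comp[OF om] by (auto simp: bset_def se_def)
    have sub2: "{i. i < t \<and> U < se (\<omega> i)} \<subseteq> {i. i < t \<and> \<omega> i \<in> bset}"
      using space_trials_comp[OF om] by (auto simp: bset_def se_def U_def)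
    have "cl \<omega> \<le> nb" unfolding cl_def nb_def by (rule card_mono[OF _ sub1]) simp
    moreover have "cg \<omega> \<le> nb" unfolding cg_def nb_def by (rule card_mono[OF _ sub2]) simp
    ultimately have "cl \<omega> \<le> t div 2" "cg \<omega> < t - t div 2" using nb2 by linarith+
    then show "\<omega> \<in> {\<omega> \<in> space ?M. real (cl \<omega>) \<le> real (t div 2) \<and> real (cg \<omega>) < real (t - t div 2)}"
      using om by simp
  qed
  have "T.prob G \<le> T.prob {\<omega> \<in> space ?M. OPT \<le> coarse_output n F A t \<omega> \<and> coarse_output n F A t \<omega> \<le> U}"
    unfolding Tchar by (rule T.finite_measure_mono[OF GT Tm])
  with PG show ?thesis unfolding U_def by simp
qed

lemma final_inst:
  fixes c \<delta> :: real and n :: nat and F :: "(nat \<Rightarrow> nat \<Rightarrow> real) set" and A :: "nat \<Rightarrow> nat \<Rightarrow> real"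
  assumes c: "313 \<le> c" and fin: "finite F" and ne: "F \<noteq> {}" and d0: "0 < \<delta>" and d1: "\<delta> < 1"
  shows "let t = num_trials c \<delta>;
         OPT = Min ((\<lambda>B. frob n n (\<lambda>i j. A i j - B i j)) ` F)
     in real (num_queries t) \<le> (2 * c + 2) * (ln (1 / \<delta>) + 1) \<and>
        measure (trials n t)
          {\<omega> \<in> space (trials n t).
             OPT \<le> coarse_output n F A t \<omega> \<and>
             coarse_output n F A t \<omega> \<le> 6 * real (card F) * OPT} \<ge> 1 - \<delta>"
proof -
  define L where "L = ln (1 / \<delta>)"
  have L0: "0 < L" unfolding L_def using d0 d1 by (simp add: ln_gt_zero)
  define t where "t = num_trials c \<delta>"
  have cL: "0 < c * L" using c L0 by simp
  have ceq: "real t = real_of_int \<lceil>c * L\<rceil>"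
    unfolding t_def num_trials_def L_def[symmetric] using cL by simp
  have tge: "c * L \<le> real t" unfolding ceq by (rule le_of_int_ceiling)
  have tle: "real t \<le> c * L + 1" unfolding ceq by (rule of_int_ceiling_le_add_one)
  have t0: "0 < t" using tge cL by linarith
  have q: "real (num_queries t) \<le> (2 * c + 2) * (L + 1)"
  proof -
    have "real (num_queries t) = 2 * real t" by (simp add: num_queries_def)
    also have "\<dots> \<le> 2 * (c * L) + 2" using tle by simp
    also have "\<dots> \<le> (2 * c + 2) * (L + 1)" using c L0 by (simp add: algebra_simps)
    finally show ?thesis .
  qed
  have "exp (- 2 * real t / 625) \<le> exp (- L)"
  proof -
    have "313 * L \<le> c * L" using c L0 by (intro mult_right_mono) auto
    with tge have "- 2 * real t / 625 \<le> - L" using L0 by linarith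
    then show ?thesis by simp
  qed
  also have "exp (- L) = \<delta>" unfolding L_def using d0 by (simp add: ln_div)
  finally have ex: "exp (- 2 * real t / 625) \<le> \<delta>" .
  have P: "measure (trials n t)
          {\<omega> \<in> space (trials n t).
             Min ((\<lambda>B. frob n n (\<lambda>i j. A i j - B i j)) ` F) \<le> coarse_output n F A t \<omega> \<and>
             coarse_output n F A t \<omega> \<le> 6 * real (card F) * Min ((\<lambda>B. frob n n (\<lambda>i j. A i j - B i j)) ` F)}
        \<ge> 1 - exp (- 2 * real t / 625)"
    by (rule main_prob[OF fin ne t0])
  show ?thesis
    unfolding Let_def t_def[symmetric] L_def[symmetric] using q P ex by simp
qed

theorem claim2p4:
  shows "\<exists>c0::real. \<forall>c\<ge>c0. \<exists>C::real. \<forall>(n::nat) F A (\<delta>::real).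
    finite F \<and> F \<noteq> {} \<and> F \<subseteq> sq_mats n \<and> A \<in> sq_mats n \<and> 0 < \<delta> \<and> \<delta> < 1 \<longrightarrow>
    (let t = num_trials c \<delta>;
         OPT = Min ((\<lambda>B. frob n n (\<lambda>i j. A i j - B i j)) ` F)
     in real (num_queries t) \<le> C * (ln (1 / \<delta>) + 1) \<and>
        measure (trials n t)
          {\<omega> \<in> space (trials n t).
             OPT \<le> coarse_output n F A t \<omega> \<and>
             coarse_output n F A t \<omega> \<le> 6 * real (card F) * OPT} \<ge> 1 - \<delta>)"
proof (rule exI[of _ 313], intro allI impI)
  fix c :: real assume c: "313 \<le> c"
  show "\<exists>C::real. \<forall>(n::nat) F A (\<delta>::real).
    finite F \<and> F \<noteq> {} \<and> F \<subseteq> sq_mats n \<and> A \<in> sq_mats n \<and> 0 < \<delta> \<and> \<delta> < 1 \<longrightarrow>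
    (let t = num_trials c \<delta>;
         OPT = Min ((\<lambda>B. frob n n (\<lambda>i j. A i j - B i j)) ` F)
     in real (num_queries t) \<le> C * (ln (1 / \<delta>) + 1) \<and>
        measure (trials n t)
          {\<omega> \<in> space (trials n t).
             OPT \<le> coarse_output n F A t \<omega> \<and>
             coarse_output n F A t \<omega> \<le> 6 * real (card F) * OPT} \<ge> 1 - \<delta>)"
    by (rule exI[of _ "2 * c + 2"]) (auto intro: final_inst[OF c])
qed

end
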